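(* Let $d\in\mathbb{N}$, $\mathbf{s}=(s_1,\dots,s_d)\in\mathbb{N}^d$, and let each $l_j(n)$ ($1\le j\le d$) be one of $2n$, $2n+1$, $2n-1$. Then \[ \sum_{n_0>n_1\succ n_2\succ\cdots\succ n_d\succ0}\frac{a_{n_0}}{(2n_0-1)\,l_1(n_1)^{s_1}\cdots l_d(n_d)^{s_d}}=\sum_{n_1\succ n_2\succ\cdots\succ n_d\succ0}\frac{a_{n_1}}{l_1(n_1)^{s_1}\cdots l_d(n_d)^{s_d}}, \] where each $\succ$ can be either $\ge$ or $>$ (the same choices on both sides), provided the series is defined.
   Context: $a_0=1$ and $a_n=\frac{1}{4^n}\binom{2n}{n}$ for $n\ge1$; summation indices are nonnegative integers. *)

theory Defs
  imports "HOL-Analysis.Analysis"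
begin

definition acoef :: "nat \<Rightarrow> real" where
  "acoef n = (if n = 0 then 1 else real ((2*n) choose n) / 4 ^ n)"

definition succ_rel :: "bool \<Rightarrow> nat \<Rightarrow> nat \<Rightarrow> bool" where
  "succ_rel b x y = (if b then y < x else y \<le> x)"

definition lfun :: "int \<Rightarrow> nat \<Rightarrow> real" where
  "lfun c n = 2 * real n + of_int c"

text \<open>Index tuples (n_1,...,n_d) as functions nat \<Rightarrow> nat that vanish outside {1..d}, with
  n_1 \<succ> n_2 \<succ> ... \<succ> n_d \<succ> 0 (n_{d+1} = 0 by the support condition).\<close>
definition chain_tuples :: "nat \<Rightarrow> (nat \<Rightarrow> bool) \<Rightarrow> (nat \<Rightarrow> nat) set" where
  "chain_tuples d st = {n. (\<forall>i. (i = 0 \<or> d < i) \<longrightarrow> n i = 0) \<and>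
                            (\<forall>j\<in>{1..d}. succ_rel (st j) (n j) (n (Suc j)))}"

end

theory Submission
  imports Defs
begin

lemma acoef_alt: "acoef n = real ((2*n) choose n) / 4 ^ n"
  by (simp add: acoef_def)

lemma binom_rec: "((2*m+2) choose (m+1)) * (m+1) * (m+1) = (2*m+2)*(2*m+1) * ((2*m) choose m)"
proof -
  have 1: "(m+1) * ((2*m+2) choose (m+1)) = (2*m+2) * ((2*m+1) choose m)"
    using Suc_times_binomial[of m "2*m+1"] by simp
  have 2: "((2*m+1) choose (m+1)) * (m+1) = (2*m+1) * ((2*m) choose m)"
    using Suc_times_binomial_eq[of "2*m" m] by simp
  have 3: "((2*m+1) choose (m+1)) = ((2*m+1) choose m)"
    using binomial_symmetric[of m "2*m+1"] by simp
  have "((2*m+2) choose (m+1)) * (m+1) * (m+1) = ((m+1) * ((2*m+2) choose (m+1))) * (m+1)"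
    by (simp only: mult.commute)
  also have "\<dots> = (2*m+2) * (((2*m+1) choose (m+1)) * (m+1))" unfolding 1 3 by (simp only: mult.assoc)
  also have "\<dots> = (2*m+2)*(2*m+1) * ((2*m) choose m)" unfolding 2 by (simp only: mult.assoc)
  finally show ?thesis .
qed

lemma real_aux:
  fixes A B q x :: real
  assumes "A * (x+1) * (x+1) = (2*x+2)*(2*x+1) * B" "q > 0" "x \<ge> 0"
  shows "A / (4 * q) = B / q * (2*x+1) / (2*x+2)"
proof -
  have nz: "x + 1 \<noteq> 0" using assms(3) by simp
  have "(A*(x+1))*(x+1) = (2*(2*x+1)*B)*(x+1)" using assms(1) by (simp add: algebra_simps)
  hence "A*(x+1) = 2*(2*x+1)*B" using nz by simp
  hence eA: "A = 2*(2*x+1)*B / (x+1)" using nz by (simp add: eq_divide_eq)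
  have e2: "2*x+2 = 2*(x+1)" by simp
  have n1: "(x + 1) * (4 * q) \<noteq> 0" and n2: "q * (2 * (x + 1)) \<noteq> 0" using nz assms(2) by auto
  have "2 * (2 * x + 1) * B / (x + 1) / (4 * q) = (2 * (2 * x + 1) * B) / ((x + 1) * (4 * q))"
    by (simp only: divide_divide_eq_left)
  also have "\<dots> = (B * (2 * x + 1)) / (q * (2 * (x + 1)))"
    using n1 n2 by (subst frac_eq_eq) (auto simp: algebra_simps)
  also have "\<dots> = B / q * (2 * x + 1) / (2 * (x + 1))" by simp
  finally show ?thesis unfolding eA e2 .
qed

lemma acoef_rec: "acoef (Suc m) = acoef m * (2*real m+1) / (2*real m+2)"
proof -
  have h: "real (((2*m+2) choose (m+1))) * (real m+1) * (real m+1) = (2*real m+2)*(2*real m+1) * real ((2*m) choose m)"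
  proof -
    have h0: "real (((2*m+2) choose (m+1)) * (m+1) * (m+1)) = real ((2*m+2)*(2*m+1) * ((2*m) choose m))"
      by (simp only: binom_rec)
    show ?thesis using h0 unfolding of_nat_mult of_nat_add of_nat_1 of_nat_numeral .
  qed
  have e: "acoef (Suc m) = real (((2*m+2) choose (m+1))) / (4 * 4^m)"
    unfolding acoef_alt by (simp add: mult_2 mult_2_right)
  show ?thesis unfolding e unfolding acoef_alt
    by (rule real_aux[OF h]) auto
qed

lemma acoef_nonneg: "acoef m \<ge> 0" by (simp add: acoef_alt)

lemma acoef_sq: "acoef m ^ 2 * (2*m+1) \<le> 1"
proof (induction m)
  case 0 then show ?case by (simp add: acoef_def)
next
  case (Suc m)
  have "acoef (Suc m) ^ 2 * (2*Suc m+1) = acoef m ^ 2 * (2*m+1) * ((2*m+1)*(2*m+3) / (2*m+2)^2)"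
    by (simp add: acoef_rec field_simps power2_eq_square)
  also have "\<dots> \<le> 1 * 1"
  proof (rule mult_mono)
    have "real ((2*m+1)*(2*m+3)) \<le> real ((2*m+2)^2)"
      by (simp only: of_nat_le_iff) (simp add: power2_eq_square algebra_simps)
    thus "real ((2*m+1)*(2*m+3)) / real ((2*m+2)^2) \<le> 1"
      by (simp add: divide_le_eq_1)
  qed (use Suc in auto)
  finally show ?case by simp
qed

lemma acoef_lim: "acoef \<longlonglongrightarrow> 0"
proof -
  have "(\<lambda>m. acoef m ^ 2) \<longlonglongrightarrow> 0"
  proof (rule tendsto_sandwich[of "\<lambda>_. 0" _ _ "\<lambda>m. 1 / (real m + 1)"])
    show "\<forall>\<^sub>F n in sequentially. 0 \<le> acoef n ^ 2" by simp
    show "\<forall>\<^sub>F n in sequentially. acoef n ^ 2 \<le> 1 / (real n+1)"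
    proof (intro always_eventually allI)
      fix n
      have "acoef n ^ 2 * (real n + 1) \<le> acoef n ^ 2 * (2*n+1)"
        by (rule mult_left_mono) auto
      hence "acoef n ^ 2 * (real n + 1) \<le> 1" using acoef_sq[of n] by linarith
      thus "acoef n ^ 2 \<le> 1 / (real n+1)" by (simp add: field_simps)
    qed
    show "(\<lambda>m. 1 / (real m+1)) \<longlonglongrightarrow> 0" using LIMSEQ_inverse_real_of_nat by (simp add: inverse_eq_divide add.commute)
  qed simp
  hence "(\<lambda>m. sqrt (acoef m ^ 2)) \<longlonglongrightarrow> sqrt 0" by (rule tendsto_real_sqrt)
  thus ?thesis by (simp add: acoef_nonneg)
qed

lemma tail_has_sum: "((\<lambda>m. acoef m / (2 * real m - 1)) has_sum acoef N) {N<..}"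
proof -
  have step0: "acoef (Suc x) / (2 * real (Suc x) - 1) = acoef x - acoef (Suc x)" for x
  proof -
    have e: "2 * real (Suc x) - 1 = 2 * real x + 1" by simp
    have p1: "2 * real x + 1 > 0" and p2: "2 * real x + 2 > 0" by auto
    have "acoef x * (2*real x+1) / (2*real x+2) / (2 * real x + 1) = acoef x / (2*real x+2)"
      using p1 by simp
    moreover have "acoef x - acoef x * (2*real x+1) / (2*real x+2) = acoef x / (2*real x+2)"
      using p2 by (simp add: field_simps)
    ultimately show ?thesis unfolding e acoef_rec by (simp add: add.commute)
  qed
  have step: "acoef (N+k+1) / (2 * real (N+k+1) - 1) = acoef (N+k) - acoef (N+k+1)" for k
    using step0[of "N+k"] by simp
  have "(\<lambda>k. acoef (Suc k + N) - acoef (k+N)) sums (0 - acoef (0+N))"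
    by (rule telescope_sums) (rule LIMSEQ_ignore_initial_segment[OF acoef_lim])
  hence "(\<lambda>k. acoef (N+k+1) / (2 * real (N+k+1) - 1)) sums acoef N"
  proof -
    assume h: "(\<lambda>k. acoef (Suc k + N) - acoef (k + N)) sums (0 - acoef (0 + N))"
    have "(\<lambda>k. - (acoef (Suc k + N) - acoef (k + N))) sums (- (0 - acoef (0 + N)))"
      by (rule sums_minus[OF h])
    moreover have "(\<lambda>k. - (acoef (Suc k + N) - acoef (k + N))) = (\<lambda>k. acoef (N+k+1) / (2 * real (N+k+1) - 1))"
    proof (rule ext)
      fix k
      have e: "N+k+1 = Suc (k+N)" "Suc k + N = Suc (k+N)" by simp_all
      show "- (acoef (Suc k + N) - acoef (k + N)) = acoef (N+k+1) / (2 * real (N+k+1) - 1)"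
        unfolding e step0 by simp
    qed
    ultimately show ?thesis by simp
  qed
  hence "((\<lambda>k. acoef (N+k+1) / (2 * real (N+k+1) - 1)) has_sum acoef N) UNIV"
    by (rule sums_nonneg_imp_has_sum) (simp add: acoef_nonneg)
  moreover have "bij_betw (\<lambda>k. N+k+1) UNIV {N<..}"
  proof -
    have i: "inj (\<lambda>k. N+k+1)" by (auto simp: inj_def)
    have r: "range (\<lambda>k. N+k+1) = {N<..}"
    proof (intro equalityI subsetI)
      fix x assume "x \<in> range (\<lambda>k. N+k+1)" thus "x \<in> {N<..}" by auto
    next
      fix x assume "x \<in> {N<..}" hence "x = N + (x-N-1) + 1" by simp
      thus "x \<in> range (\<lambda>k. N+k+1)" by (rule range_eqI)
    qed
    show ?thesis unfolding bij_betw_def using i r by simp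
  qed
  ultimately show ?thesis
    using has_sum_reindex_bij_betw[of "\<lambda>k. N+k+1" UNIV "{N<..}" "\<lambda>m. acoef m / (2 * real m - 1)" "acoef N"]
    by blast
qed

theorem theorem5p2:
  fixes d :: nat and s :: "nat \<Rightarrow> nat" and c :: "nat \<Rightarrow> int" and st :: "nat \<Rightarrow> bool"
  assumes "d \<ge> 1"
    and "\<forall>j\<in>{1..d}. c j \<in> {-1, 0, 1}"
    and "\<forall>n\<in>chain_tuples d st. \<forall>j\<in>{1..d}. lfun (c j) (n j) \<noteq> 0"
    and "(\<lambda>n. acoef (n 1) / (\<Prod>j\<in>{1..d}. lfun (c j) (n j) ^ s j)) summable_on chain_tuples d st"
  shows "((\<lambda>(m, n). acoef m / ((2 * real m - 1) * (\<Prod>j\<in>{1..d}. lfun (c j) (n j) ^ s j)))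
           has_sum (\<Sum>\<^sub>\<infinity>n\<in>chain_tuples d st. acoef (n 1) / (\<Prod>j\<in>{1..d}. lfun (c j) (n j) ^ s j)))
         {(m, n). n \<in> chain_tuples d st \<and> n 1 < m}"
proof -
  define C where "C = chain_tuples d st"
  define P where "P = (\<lambda>n::nat\<Rightarrow>nat. \<Prod>j\<in>{1..d}. lfun (c j) (n j) ^ s j)"
  define g0 where "g0 = (\<lambda>n. acoef (n 1) / P n)"
  define h where "h = (\<lambda>m::nat. acoef m / (2 * real m - 1))"
  define B where "B = (\<lambda>n::nat\<Rightarrow>nat. {n 1<..})"
  define F where "F = (\<lambda>(n::nat\<Rightarrow>nat, m::nat). h m * (1 / P n))"
  have g0sum: "g0 summable_on C" using assms(4) unfolding g0_def P_def C_def .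
  have hnn: "h m \<ge> 0" if "m \<in> B n" for m n
  proof -
    have "2 * real m - 1 > 0" using that unfolding B_def by auto
    thus ?thesis unfolding h_def using acoef_nonneg by simp
  qed
  have per: "((\<lambda>m. F (n, m)) has_sum g0 n) (B n)" for n
  proof -
    have "((\<lambda>m. h m * (1 / P n)) has_sum (acoef (n 1) * (1 / P n))) (B n)"
      by (rule has_sum_cmult_left) (unfold h_def B_def, rule tail_has_sum)
    thus ?thesis unfolding F_def g0_def by simp
  qed
  have perabs: "((\<lambda>m. norm (F (n, m))) has_sum norm (g0 n)) (B n)" for n
  proof -
    have 1: "((\<lambda>m. h m * \<bar>1 / P n\<bar>) has_sum (acoef (n 1) * \<bar>1 / P n\<bar>)) (B n)"
      by (rule has_sum_cmult_left) (unfold h_def B_def, rule tail_has_sum)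
    have 2: "norm (F (n, m)) = h m * \<bar>1 / P n\<bar>" if "m \<in> B n" for m
    proof -
      have "norm (F (n, m)) = \<bar>h m\<bar> * \<bar>1 / P n\<bar>" unfolding F_def by (simp only: real_norm_def abs_mult prod.case)
      thus ?thesis using hnn[OF that] by simp
    qed
    have 3: "acoef (n 1) * \<bar>1 / P n\<bar> = norm (g0 n)"
      unfolding g0_def using acoef_nonneg[of "n 1"] by (simp add: abs_mult)
    have eq: "((\<lambda>m. norm (F (n, m))) has_sum (acoef (n 1) * \<bar>1 / P n\<bar>)) (B n) \<longleftrightarrow>
              ((\<lambda>m. h m * \<bar>1 / P n\<bar>) has_sum (acoef (n 1) * \<bar>1 / P n\<bar>)) (B n)"
      by (rule has_sum_cong) (rule 2)
    show ?thesis using eq 1 unfolding 3 by blast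
  qed
  have gabs: "(\<lambda>n. norm (g0 n)) summable_on C"
    using g0sum summable_on_iff_abs_summable_on_real by blast
  have Fabs: "(\<lambda>x. norm (F x)) summable_on Sigma C B"
    by (rule summable_on_SigmaI[OF perabs gabs]) simp
  have Fsum: "F summable_on Sigma C B"
    by (rule abs_summable_summable) (use Fabs in simp)
  have FS: "(F has_sum infsum g0 C) (Sigma C B)"
    by (rule has_sum_SigmaI[OF per _ Fsum]) (use g0sum in \<open>simp add: has_sum_infsum\<close>)
  define f where "f = (\<lambda>(m, n). acoef m / ((2 * real m - 1) * P n))"
  have fF: "f \<circ> prod.swap = F"
    unfolding f_def F_def h_def by (auto simp: fun_eq_iff)
  have img: "prod.swap ` Sigma C B = {(m, n). n \<in> C \<and> n 1 < m}"
    unfolding B_def by force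
  have "(f has_sum infsum g0 C) (prod.swap ` Sigma C B)"
    by (subst has_sum_reindex) (auto simp: fF FS)
  thus ?thesis unfolding img unfolding f_def P_def g0_def C_def .
qed

end
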